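(* Let $M_1,\dots,M_s$ be complex $4\times 4$ matrices each of rank exactly $2$. Then there exists an open dense subset $\Delta\subset L\times L$, where $L$ is the space of real $4\times 4$ matrices, such that for every $(L_1,L_2)\in\Delta$ and every $1\le i\le s$, the leading principal minor of order $2$ of $L_1 M_i L_2$ (the determinant of its upper-left $2\times 2$ submatrix) is nonzero. *)

theory Defs
  imports "HOL-Analysis.Analysis"
begin

definition cmat :: "real^'n^'m \<Rightarrow> complex^'n^'m" where
  "cmat A = (\<chi> i j. complex_of_real (A $ i $ j))"

text \<open>Leading principal minor of order 2: the determinant of the upper-left
  2x2 submatrix (rows and columns with indices 1, 2, following the
  HOL-Analysis convention that 1 is the first index).\<close>
definition lead_minor2 :: "complex^4^4 \<Rightarrow> complex" where
  "lead_minor2 A = A $ 1 $ 1 * A $ 2 $ 2 - A $ 1 $ 2 * A $ 2 $ 1"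

end

theory Submission
  imports Defs "HOL-Computational_Algebra.Polynomial"
begin

lemma rank_minor:
  fixes M :: "complex^4^4"
  assumes "rank M = 2"
  shows "\<exists>a b c d. M$a$c * M$b$d - M$a$d * M$b$c \<noteq> 0"
proof (rule ccontr)
  assume H: "\<not> ?thesis"
  show False
  proof (cases "M = 0")
    case True
    then have "rows M = {0}" by (auto simp: rows_def row_def vec_eq_iff)
    then have "rank M = 0" by (simp add: row_rank_def_gen)
    with assms show False by simp
  next
    case False
    then obtain a c where ac: "M$a$c \<noteq> 0" by (auto simp: vec_eq_iff)
    have "rows M \<subseteq> vec.span {M$a}"
    proof
      fix r assume "r \<in> rows M"
      then obtain b where r: "r = M$b" by (auto simp: rows_def row_def vec_eq_iff)
      have "M$b = (M$b$c / M$a$c) *s M$a"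
      proof (subst vec_eq_iff, rule allI)
        fix d
        have "M$a$c * M$b$d - M$a$d * M$b$c = 0" using H by blast
        then show "M$b$d = ((M$b$c / M$a$c) *s M$a) $ d" using ac
          by (simp add: field_simps)
      qed
      then show "r \<in> vec.span {M$a}" unfolding r
        by (metis vec.span_base vec.span_scale insertI1)
    qed
    then have "vec.dim (rows M) \<le> card {M$a}"
      by (intro vec.dim_le_card) auto
    then show False using assms by (simp add: row_rank_def_gen)
  qed
qed

lemma good_point:
  fixes M :: "complex^4^4"
  assumes "rank M = 2"
  shows "\<exists>L1 L2. lead_minor2 (cmat L1 ** M ** cmat L2) \<noteq> 0"
proof -
  obtain a b c d where H: "M$a$c * M$b$d - M$a$d * M$b$c \<noteq> 0"
    using rank_minor[OF assms] by blast
  define L1 :: "real^4^4" where "L1 = (\<chi> i k. if (i=1 \<and> k=a) \<or> (i=2 \<and> k=b) then 1 else 0)"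
  define L2 :: "real^4^4" where "L2 = (\<chi> l j. if (j=1 \<and> l=c) \<or> (j=2 \<and> l=d) then 1 else 0)"
  have n12: "(1::4) \<noteq> 2" by simp
  have e: "(cmat L1 ** M ** cmat L2) $ 1 $ 1 = M$a$c"
          "(cmat L1 ** M ** cmat L2) $ 1 $ 2 = M$a$d"
          "(cmat L1 ** M ** cmat L2) $ 2 $ 1 = M$b$c"
          "(cmat L1 ** M ** cmat L2) $ 2 $ 2 = M$b$d"
    by (simp_all add: matrix_matrix_mult_def cmat_def L1_def L2_def n12 n12[symmetric]
        if_distrib[of complex_of_real] mult_delta_left mult_delta_right sum.delta sum.delta' cong: if_cong)
  show ?thesis using H by (intro exI[of _ L1] exI[of _ L2]) (simp add: lead_minor2_def e)
qed

lemma dense_nonzero: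
  fixes g :: "'a::real_normed_vector \<Rightarrow> complex"
  assumes q: "g q \<noteq> 0"
    and lin: "\<And>z w. \<exists>p. \<forall>t. poly p (of_real t) = g (z + t *\<^sub>R w)"
  shows "closure {z. g z \<noteq> 0} = UNIV"
proof -
  have "x \<in> closure {z. g z \<noteq> 0}" for x
  proof (unfold closure_approachable, intro allI impI)
    fix e :: real assume e: "e > 0"
    define w where "w = q - x"
    obtain p where p: "\<And>t. poly p (of_real t) = g (x + t *\<^sub>R w)" using lin by blast
    have "poly p (of_real 1) = g q" using p[of 1] by (simp add: w_def)
    then have "poly p (of_real 1) \<noteq> 0" using q by simp
    then have "p \<noteq> 0" by auto
    then have fin: "finite {y. poly p y = 0}" by (rule poly_roots_finite)
    define F :: "real set" where "F = of_real -` {y. poly p y = 0}"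
    have "finite F" unfolding F_def using fin by (rule finite_vimageI) (rule inj_of_real)
    define \<delta> where "\<delta> = e / (norm w + 1)"
    have dpos: "\<delta> > 0" using e by (simp add: \<delta>_def add_nonneg_pos)
    have "infinite ({0<..<\<delta>} - F)" using dpos \<open>finite F\<close> by simp
    then obtain t where t: "t \<in> {0<..<\<delta>}" "t \<notin> F"
      by (metis Diff_iff finite.emptyI ex_in_conv)
    have "g (x + t *\<^sub>R w) \<noteq> 0" using t(2) by (simp add: F_def p[symmetric])
    moreover have "dist (x + t *\<^sub>R w) x < e"
    proof -
      have "dist (x + t *\<^sub>R w) x = t * norm w" using t(1) by (simp add: dist_norm)
      also have "\<dots> \<le> t * (norm w + 1)" using t(1) by simp
      also have "\<dots> < \<delta> * (norm w + 1)"
        using t(1) by (intro mult_strict_right_mono) (auto simp: add_nonneg_pos)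
      also have "\<dots> = e" proof -
        have "norm w + 1 \<noteq> 0" using norm_ge_zero[of w] by linarith
        then show ?thesis by (simp add: \<delta>_def)
      qed
      finally show ?thesis .
    qed
    ultimately show "\<exists>y\<in>{z. g z \<noteq> 0}. dist y x < e" by blast
  qed
  then show ?thesis by auto
qed

lemma dense_INT:
  fixes U :: "'i \<Rightarrow> 'a::topological_space set"
  assumes "finite I" "\<And>i. i \<in> I \<Longrightarrow> open (U i) \<and> closure (U i) = UNIV"
  shows "closure (\<Inter>i\<in>I. U i) = UNIV"
  using assms
proof (induction I rule: finite_induct)
  case empty then show ?case by simp
next
  case (insert x I)
  let ?T = "\<Inter>i\<in>I. U i"
  have o: "open (U x)" and c: "closure (U x) = UNIV" using insert.prems by auto
  have "closure ?T = UNIV" using insert by auto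
  then have "U x \<subseteq> closure (U x \<inter> ?T)" using open_Int_closure_subset[OF o, of ?T] by simp
  then have "closure (U x) \<subseteq> closure (U x \<inter> ?T)" by (simp add: closure_minimal)
  then show ?case using c by auto
qed

definition evm :: "'a::comm_semiring_1 poly^'n^'m \<Rightarrow> 'a \<Rightarrow> 'a^'n^'m" where
  "evm X z = (\<chi> i j. poly (X$i$j) z)"

lemma evm_mult: "evm (X ** Y) z = evm X z ** evm Y z"
  by (simp add: evm_def matrix_matrix_mult_def vec_eq_iff poly_sum)

definition linm :: "real^'n^'m \<Rightarrow> real^'n^'m \<Rightarrow> complex poly^'n^'m" where
  "linm A C = (\<chi> i j. [:complex_of_real (A$i$j), complex_of_real (C$i$j):])"

definition constm :: "complex^'n^'m \<Rightarrow> complex poly^'n^'m" where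
  "constm M = (\<chi> i j. [:M$i$j:])"

lemma evm_linm: "evm (linm A C) (of_real t) = cmat (A + t *\<^sub>R C)"
  by (simp add: evm_def linm_def cmat_def vec_eq_iff algebra_simps)

lemma evm_constm: "evm (constm M) x = M"
  by (simp add: evm_def constm_def vec_eq_iff)

definition pminor :: "complex poly^4^4 \<Rightarrow> complex poly" where
  "pminor X = X$1$1 * X$2$2 - X$1$2 * X$2$1"

lemma poly_pminor: "poly (pminor X) x = lead_minor2 (evm X x)"
  by (simp add: pminor_def lead_minor2_def evm_def)

lemma line_poly:
  fixes M :: "complex^4^4"
  shows "\<exists>p. \<forall>t. poly p (of_real t) =
     (\<lambda>z. lead_minor2 (cmat (fst z) ** M ** cmat (snd z))) (z + t *\<^sub>R w)"
proof -
  let ?p = "pminor (linm (fst z) (fst w) ** constm M ** linm (snd z) (snd w))"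
  have "poly ?p (of_real t) = lead_minor2 (cmat (fst (z + t *\<^sub>R w)) ** M ** cmat (snd (z + t *\<^sub>R w)))" for t
    by (simp add: poly_pminor evm_mult evm_linm evm_constm)
  then show ?thesis by blast
qed

lemma cont_minor:
  fixes M :: "complex^4^4"
  shows "continuous_on UNIV (\<lambda>z::(real^4^4)\<times>(real^4^4). lead_minor2 (cmat (fst z) ** M ** cmat (snd z)))"
  unfolding lead_minor2_def matrix_matrix_mult_def cmat_def
  by (simp; intro continuous_intros)

theorem lemma4p1:
  fixes M :: "nat \<Rightarrow> complex^4^4" and s :: nat
  assumes "\<forall>i\<in>{1..s}. rank (M i) = 2"
  shows "\<exists>\<Delta> :: ((real^4^4) \<times> (real^4^4)) set.
           open \<Delta> \<and> closure \<Delta> = UNIV \<and>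
           (\<forall>L1 L2 i. (L1, L2) \<in> \<Delta> \<and> i \<in> {1..s} \<longrightarrow>
              lead_minor2 (cmat L1 ** M i ** cmat L2) \<noteq> 0)"
proof -
  define U where "U i = {z::(real^4^4)\<times>(real^4^4). lead_minor2 (cmat (fst z) ** M i ** cmat (snd z)) \<noteq> 0}" for i
  have oU: "open (U i)" for i
    unfolding U_def by (rule open_Collect_neq[OF cont_minor continuous_on_const])
  have cU: "closure (U i) = UNIV" if i: "i \<in> {1..s}" for i
  proof -
    obtain L1 L2 where "lead_minor2 (cmat L1 ** M i ** cmat L2) \<noteq> 0"
      using good_point[of "M i"] assms i by blast
    then show ?thesis unfolding U_def
      by (intro dense_nonzero[where q="(L1,L2)"] line_poly) auto
  qed
  show ?thesis
  proof (intro exI[of _ "\<Inter>i\<in>{1..s}. U i"] conjI)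
    show "open (\<Inter>i\<in>{1..s}. U i)" using oU by (intro open_INT) auto
    show "closure (\<Inter>i\<in>{1..s}. U i) = UNIV" using oU cU by (intro dense_INT) auto
    show "\<forall>L1 L2 i. (L1, L2) \<in> (\<Inter>i\<in>{1..s}. U i) \<and> i \<in> {1..s} \<longrightarrow>
              lead_minor2 (cmat L1 ** M i ** cmat L2) \<noteq> 0"
      by (auto simp: U_def)
  qed
qed

end
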